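(* Under the assumptions of the preceding lemma (two homomorphous MDPs with deterministic dynamics $T,T'$, $T'\in(T,\varepsilon_m)$, reward $\lambda_1$-Lipschitz in the action, $T$ and $T'$ $\lambda_2$-inverse Lipschitz in the action), suppose the action gap $\Delta$ satisfies $$\Delta>\frac{(2-\gamma)\lambda_1\lambda_2\varepsilon_m}{1-\gamma}.$$ Then $d^*_T(s)=d^*_{T'}(s)$ for all $s\in\mathcal S$.
   Context: Setting: An MDP has state space $\mathcal S$ (normed), action space $\mathcal A$ with the $\ell_1$ norm, deterministic dynamics $T:\mathcal S\times\mathcal A\to\mathcal S$, bounded reward $r(s,a,s')$, initial distribution $\rho_0$, discount $\gamma\in(0,1)$. $V^*_T(s)=\max_a[r(s,a,T(s,a))+\gamma V^*_T(T(s,a))]$, $Q^*_T(s,a)=r(s,a,T(s,a))+\gamma V^*_T(T(s,a))$, and $\pi^*_T(s)$ is the optimal (deterministic) action. Homomorphous MDPs share $\mathcal S,\mathcal A,r,\rho_0,\gamma$ and satisfy $\{T(s,a):a\in\mathcal A\}=\{T'(s,a):a\in\mathcal A\}$ for every $s$. $T'\in(T,\varepsilon_m)$ means $\|T(s,a)-T'(s,a)\|\le\varepsilon_m$ for all $(s,a)$. Lipschitz: $|r(s,a_1,s')-r(s,a_2,s')|\le\lambda_1\|a_1-a_2\|_1$; inverse Lipschitz: $\|a_1-a_2\|_1\le\lambda_2\|T(s,a_1)-T(s,a_2)\|$ (and likewise for $T'$). The action gap is $\Delta=\min_{\tilde T\in\{T,T'\}}\min_{s\in\mathcal S}\min_{a\neq\pi^*_{\tilde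 T}(s)}\left(V^*_{\tilde T}(s)-Q^*_{\tilde T}(s,a)\right)$. For a policy $\pi$, $d^\pi_T(s)=(1-\gamma)\sum_{t\ge0}\gamma^t p_T(s_t=s\mid\pi)$ is the discounted stationary state distribution under dynamics $T$ starting from $s_0\sim\rho_0$, and $d^*_T:=d^{\pi^*_T}_T$. *)

theory Defs
  imports "HOL-Probability.Probability"
begin

definition l1norm :: "real ^ 'n \<Rightarrow> real" where
  "l1norm a = (\<Sum>i\<in>UNIV. \<bar>a $ i\<bar>)"

definition Vstar ::
  "('s \<Rightarrow> 'act \<Rightarrow> 's) \<Rightarrow> ('s \<Rightarrow> 'act \<Rightarrow> 's \<Rightarrow> real) \<Rightarrow> real \<Rightarrow> 'act set \<Rightarrow> 's \<Rightarrow> real" where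
  "Vstar T r \<gamma> A = (THE V. bounded (range V) \<and>
      (\<forall>s. V s = (SUP a\<in>A. r s a (T s a) + \<gamma> * V (T s a))))"

definition Qstar ::
  "('s \<Rightarrow> 'act \<Rightarrow> 's) \<Rightarrow> ('s \<Rightarrow> 'act \<Rightarrow> 's \<Rightarrow> real) \<Rightarrow> real \<Rightarrow> 'act set \<Rightarrow> 's \<Rightarrow> 'act \<Rightarrow> real" where
  "Qstar T r \<gamma> A s a = r s a (T s a) + \<gamma> * Vstar T r \<gamma> A (T s a)"

definition pistar ::
  "('s \<Rightarrow> 'act \<Rightarrow> 's) \<Rightarrow> ('s \<Rightarrow> 'act \<Rightarrow> 's \<Rightarrow> real) \<Rightarrow> real \<Rightarrow> 'act set \<Rightarrow> 's \<Rightarrow> 'act" where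
  "pistar T r \<gamma> A s = (SOME a. a \<in> A \<and> Qstar T r \<gamma> A s a = Vstar T r \<gamma> A s)"

definition gap1 ::
  "('s \<Rightarrow> 'act \<Rightarrow> 's) \<Rightarrow> ('s \<Rightarrow> 'act \<Rightarrow> 's \<Rightarrow> real) \<Rightarrow> real \<Rightarrow> 'act set \<Rightarrow> real" where
  "gap1 T r \<gamma> A = Inf {Vstar T r \<gamma> A s - Qstar T r \<gamma> A s a | s a.
                        a \<in> A \<and> a \<noteq> pistar T r \<gamma> A s}"

definition action_gap ::
  "('s \<Rightarrow> 'act \<Rightarrow> 's) \<Rightarrow> ('s \<Rightarrow> 'act \<Rightarrow> 's) \<Rightarrow> ('s \<Rightarrow> 'act \<Rightarrow> 's \<Rightarrow> real) \<Rightarrow> real \<Rightarrow> 'act set \<Rightarrow> real" where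
  "action_gap T T' r \<gamma> A = min (gap1 T r \<gamma> A) (gap1 T' r \<gamma> A)"

primrec traj :: "('s \<Rightarrow> 'act \<Rightarrow> 's) \<Rightarrow> ('s \<Rightarrow> 'act) \<Rightarrow> 's \<Rightarrow> nat \<Rightarrow> 's" where
  "traj T \<pi> s0 0 = s0"
| "traj T \<pi> s0 (Suc t) = T (traj T \<pi> s0 t) (\<pi> (traj T \<pi> s0 t))"

definition dstat :: "('s \<Rightarrow> 'act \<Rightarrow> 's) \<Rightarrow> ('s \<Rightarrow> 'act) \<Rightarrow> 's measure \<Rightarrow> real \<Rightarrow> 's \<Rightarrow> real" where
  "dstat T \<pi> rho0 \<gamma> s = (1 - \<gamma>) * (\<Sum>t. \<gamma> ^ t * measure rho0 {s0 \<in> space rho0. traj T \<pi> s0 t = s})"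

end

theory Submission
  imports Defs
begin


lemma sup_cmp:
  fixes f g :: "'a \<Rightarrow> real"
  assumes "A \<noteq> {}" "\<forall>a\<in>A. f a \<le> g a + e" "\<forall>a\<in>A. g a \<le> C"
  shows "(SUP a\<in>A. f a) \<le> (SUP a\<in>A. g a) + e"
proof (rule cSUP_least[OF assms(1)])
  fix a assume a: "a \<in> A"
  have "bdd_above (g ` A)" using assms(3) by (auto intro: bdd_aboveI2)
  hence "g a \<le> (SUP a\<in>A. g a)" using a by (rule cSUP_upper[rotated])
  thus "f a \<le> (SUP a\<in>A. g a) + e" using assms(2) a by force
qed

lemma sup_abs:
  fixes f :: "'a \<Rightarrow> real"
  assumes "A \<noteq> {}" "\<forall>a\<in>A. \<bar>f a\<bar> \<le> C"
  shows "\<bar>(SUP a\<in>A. f a)\<bar> \<le> C"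
proof -
  obtain a0 where a0: "a0 \<in> A" using assms(1) by blast
  have bd: "bdd_above (f ` A)" using assms(2) by (intro bdd_aboveI2[where M=C]) auto
  have "f a0 \<le> (SUP a\<in>A. f a)" using cSUP_upper[OF a0 bd] .
  moreover have "(SUP a\<in>A. f a) \<le> C" using assms by (intro cSUP_least) auto
  moreover have "- C \<le> f a0" using assms(2) a0 by force
  ultimately show ?thesis by linarith
qed

lemma F_bound:
  fixes r :: "'s \<Rightarrow> 'a \<Rightarrow> 's \<Rightarrow> real"
  assumes "A \<noteq> {}" "\<forall>s a s'. \<bar>r s a s'\<bar> \<le> B" "\<forall>x. \<bar>V x\<bar> \<le> M" "0 \<le> \<gamma>"
  shows "\<bar>(SUP a\<in>A. r s a (T s a) + \<gamma> * V (T s a))\<bar> \<le> B + \<gamma> * M"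
proof (rule sup_abs[OF assms(1)], intro ballI)
  fix a
  have "\<bar>\<gamma> * V (T s a)\<bar> \<le> \<gamma> * M" using assms(3,4)
    by (simp add: abs_mult mult_left_mono)
  moreover have "\<bar>r s a (T s a)\<bar> \<le> B" using assms(2) by blast
  ultimately show "\<bar>r s a (T s a) + \<gamma> * V (T s a)\<bar> \<le> B + \<gamma> * M"
    using abs_triangle_ineq[of "r s a (T s a)" "\<gamma> * V (T s a)"] by linarith
qed

lemma F_contr1:
  fixes r :: "'s \<Rightarrow> 'a \<Rightarrow> 's \<Rightarrow> real"
  assumes "A \<noteq> {}" "\<forall>s a s'. \<bar>r s a s'\<bar> \<le> B" "\<forall>x. \<bar>V2 x\<bar> \<le> M2" "0 \<le> \<gamma>"
    "\<forall>x. V1 x - V2 x \<le> d"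
  shows "(SUP a\<in>A. r s a (T s a) + \<gamma> * V1 (T s a)) \<le> (SUP a\<in>A. r s a (T s a) + \<gamma> * V2 (T s a)) + \<gamma> * d"
proof (rule sup_cmp[OF assms(1)]; intro ballI)
  fix a
  have "\<gamma> * (V1 (T s a) - V2 (T s a)) \<le> \<gamma> * d" using assms(4,5) by (simp add: mult_left_mono)
  thus "r s a (T s a) + \<gamma> * V1 (T s a) \<le> r s a (T s a) + \<gamma> * V2 (T s a) + \<gamma> * d"
    by (simp add: algebra_simps)
  have "\<gamma> * V2 (T s a) \<le> \<gamma> * M2" using assms(3,4) by (simp add: mult_left_mono abs_le_iff)
  thus "r s a (T s a) + \<gamma> * V2 (T s a) \<le> B + \<gamma> * M2" using assms(2) by (smt (verit))
qed

lemma F_contr: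
  fixes r :: "'s \<Rightarrow> 'a \<Rightarrow> 's \<Rightarrow> real"
  assumes "A \<noteq> {}" "\<forall>s a s'. \<bar>r s a s'\<bar> \<le> B" "\<forall>x. \<bar>V1 x\<bar> \<le> M1" "\<forall>x. \<bar>V2 x\<bar> \<le> M2" "0 \<le> \<gamma>"
    "\<forall>x. \<bar>V1 x - V2 x\<bar> \<le> d"
  shows "\<bar>(SUP a\<in>A. r s a (T s a) + \<gamma> * V1 (T s a)) - (SUP a\<in>A. r s a (T s a) + \<gamma> * V2 (T s a))\<bar> \<le> \<gamma> * d"
proof -
  have "\<forall>x. V1 x - V2 x \<le> d" "\<forall>x. V2 x - V1 x \<le> d" using assms(6) by (auto simp: abs_le_iff)
  note h = this
  have "(SUP a\<in>A. r s a (T s a) + \<gamma> * V1 (T s a)) \<le> (SUP a\<in>A. r s a (T s a) + \<gamma> * V2 (T s a)) + \<gamma> * d"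
    by (rule F_contr1[OF assms(1,2,4,5) h(1)])
  moreover have "(SUP a\<in>A. r s a (T s a) + \<gamma> * V2 (T s a)) \<le> (SUP a\<in>A. r s a (T s a) + \<gamma> * V1 (T s a)) + \<gamma> * d"
    by (rule F_contr1[OF assms(1,2,3,5) h(2)])
  ultimately show ?thesis by (simp add: abs_le_iff)
qed

lemma geo_zero:
  fixes x C \<gamma> :: real
  assumes "\<And>n. x \<le> C * \<gamma> ^ n" "0 \<le> \<gamma>" "\<gamma> < 1"
  shows "x \<le> 0"
proof -
  have "(\<lambda>n. C * \<gamma> ^ n) \<longlonglongrightarrow> C * 0"
    by (intro tendsto_mult tendsto_const LIMSEQ_power_zero) (use assms in auto)
  thus ?thesis using assms(1) by (intro LIMSEQ_le_const[of "\<lambda>n. C * \<gamma> ^ n"]) auto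
qed

lemma bellman:
  fixes T :: "'s \<Rightarrow> 'a \<Rightarrow> 's" and r :: "'s \<Rightarrow> 'a \<Rightarrow> 's \<Rightarrow> real"
  assumes A: "A \<noteq> {}" and g: "0 < \<gamma>" "\<gamma> < 1" and rB: "\<exists>B. \<forall>s a s'. \<bar>r s a s'\<bar> \<le> B"
  shows "bounded (range (Vstar T r \<gamma> A)) \<and>
      (\<forall>s. Vstar T r \<gamma> A s = (SUP a\<in>A. r s a (T s a) + \<gamma> * Vstar T r \<gamma> A (T s a)))"
proof -
  obtain B where B: "\<forall>s a s'. \<bar>r s a s'\<bar> \<le> B" using rB by blast
  have B0: "0 \<le> B" using B by (meson abs_ge_zero order_trans)
  define F where "F V s = (SUP a\<in>A. r s a (T s a) + \<gamma> * V (T s a))" for V s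
  define P where "P V \<longleftrightarrow> bounded (range V) \<and> (\<forall>s. V s = F V s)" for V
  have bnd: "\<exists>M. \<forall>x. \<bar>V x\<bar> \<le> M" if "bounded (range V)" for V :: "'s \<Rightarrow> real"
    using that unfolding bounded_iff by auto
  have uniq: "V1 = V2" if h12: "P V1" "P V2" for V1 V2
  proof
    fix x
    obtain M1 M2 where M: "\<forall>x. \<bar>V1 x\<bar> \<le> M1" "\<forall>x. \<bar>V2 x\<bar> \<le> M2"
      using h12 unfolding P_def by (meson bnd)
    have "\<forall>x. \<bar>V1 x - V2 x\<bar> \<le> (M1 + M2) * \<gamma> ^ n" for n
    proof (induction n)
      case 0 then show ?case using M by (auto simp: abs_le_iff) (smt (verit))+
    next
      case (Suc n)
      show ?case
      proof
        fix x
        have "\<bar>F V1 x - F V2 x\<bar> \<le> \<gamma> * ((M1 + M2) * \<gamma> ^ n)"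
          unfolding F_def by (rule F_contr[OF A B M(1) M(2)]) (use g Suc in auto)
        thus "\<bar>V1 x - V2 x\<bar> \<le> (M1 + M2) * \<gamma> ^ Suc n" using h12 unfolding P_def
          by (simp add: algebra_simps)
      qed
    qed
    hence "\<bar>V1 x - V2 x\<bar> \<le> 0" using g by (intro geo_zero[of _ "M1+M2" \<gamma>]) auto
    thus "V1 x = V2 x" by simp
  qed
  define Vs where "Vs n = (F ^^ n) (\<lambda>_. 0)" for n
  have Vs0: "Vs 0 = (\<lambda>_. 0)" and VsS: "Vs (Suc n) = F (Vs n)" for n by (simp_all add: Vs_def)
  define K where "K = B / (1 - \<gamma>)"
  have K0: "0 \<le> K" using B0 g by (simp add: K_def)
  have KB: "B + \<gamma> * K = K" using g by (simp add: K_def field_simps)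
  have b1: "\<forall>x. \<bar>Vs n x\<bar> \<le> K" for n
  proof (induction n)
    case 0 then show ?case using K0 by (simp add: Vs0)
  next
    case (Suc n)
    have "\<bar>F (Vs n) x\<bar> \<le> B + \<gamma> * K" for x
      unfolding F_def by (rule F_bound[OF A B Suc]) (use g in auto)
    then show ?case using KB by (simp add: VsS)
  qed
  have b2: "\<forall>x. \<bar>Vs (Suc n) x - Vs n x\<bar> \<le> B * \<gamma> ^ n" for n
  proof (induction n)
    case 0
    have "\<forall>x. \<bar>(\<lambda>_. 0::real) x\<bar> \<le> 0" by simp
    note z = this
    have "\<bar>F (\<lambda>_. 0) x\<bar> \<le> B + \<gamma> * 0" for x
      unfolding F_def by (rule F_bound[OF A B z]) (use g in auto)
    then show ?case by (simp add: VsS Vs0)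
  next
    case (Suc n)
    show ?case
    proof
      fix x
      have "\<bar>F (Vs (Suc n)) x - F (Vs n) x\<bar> \<le> \<gamma> * (B * \<gamma> ^ n)"
        unfolding F_def by (rule F_contr[OF A B b1 b1]) (use g Suc in auto)
      thus "\<bar>Vs (Suc (Suc n)) x - Vs (Suc n) x\<bar> \<le> B * \<gamma> ^ Suc n"
        by (simp add: VsS algebra_simps)
    qed
  qed
  have b3: "\<forall>x. \<bar>Vs (n + j) x - Vs n x\<bar> \<le> B * (\<gamma> ^ n - \<gamma> ^ (n + j)) / (1 - \<gamma>)" for n j
  proof (induction j)
    case 0 then show ?case by simp
  next
    case (Suc j)
    show ?case
    proof
      fix x
      have "\<bar>Vs (n + Suc j) x - Vs n x\<bar> \<le> \<bar>Vs (Suc (n + j)) x - Vs (n + j) x\<bar> + \<bar>Vs (n + j) x - Vs n x\<bar>"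
        by simp
      also have "\<dots> \<le> B * \<gamma> ^ (n + j) + B * (\<gamma> ^ n - \<gamma> ^ (n + j)) / (1 - \<gamma>)"
        using b2 Suc by (intro add_mono) auto
      also have "\<dots> = B * (\<gamma> ^ n - \<gamma> ^ (n + Suc j)) / (1 - \<gamma>)"
        using g by (simp add: field_simps)
      finally show "\<bar>Vs (n + Suc j) x - Vs n x\<bar> \<le> B * (\<gamma> ^ n - \<gamma> ^ (n + Suc j)) / (1 - \<gamma>)" .
    qed
  qed
  have b3': "\<bar>Vs m x - Vs n x\<bar> \<le> K * \<gamma> ^ n" if nm: "n \<le> m" for m n x
  proof -
    obtain j where m: "m = n + j" using nm le_Suc_ex by blast
    have "B * (\<gamma> ^ n - \<gamma> ^ (n + j)) / (1 - \<gamma>) \<le> K * \<gamma> ^ n"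
    proof -
      have "\<gamma> ^ n - \<gamma> ^ (n + j) \<le> \<gamma> ^ n" using g by simp
      hence "B * (\<gamma> ^ n - \<gamma> ^ (n + j)) \<le> B * \<gamma> ^ n" using B0 by (rule mult_left_mono)
      hence "B * (\<gamma> ^ n - \<gamma> ^ (n + j)) / (1 - \<gamma>) \<le> B * \<gamma> ^ n / (1 - \<gamma>)"
        by (rule divide_right_mono) (use g in simp)
      thus ?thesis by (simp add: K_def)
    qed
    moreover have "\<bar>Vs (n + j) x - Vs n x\<bar> \<le> B * (\<gamma> ^ n - \<gamma> ^ (n + j)) / (1 - \<gamma>)"
      using b3 by blast
    ultimately show ?thesis unfolding m by linarith
  qed
  have conv: "(\<lambda>n. Vs n x) \<longlonglongrightarrow> lim (\<lambda>n. Vs n x)" for x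
  proof -
    have "Cauchy (\<lambda>n. Vs n x)"
    proof (rule metric_CauchyI)
      fix e :: real assume e: "0 < e"
      obtain M where M: "\<gamma> ^ M < e / (2 * K + 1)"
        using real_arch_pow_inv[of "e / (2 * K + 1)" \<gamma>] e K0 g by auto
      have "K * \<gamma> ^ M * 2 < e"
      proof -
        have "(2 * K + 1) * \<gamma> ^ M < e" using M K0 by (simp add: field_simps)
        moreover have "0 \<le> \<gamma> ^ M" using g by simp
        moreover have "(2 * K + 1) * \<gamma> ^ M = K * \<gamma> ^ M * 2 + \<gamma> ^ M" by (simp add: algebra_simps)
        ultimately show ?thesis by linarith
      qed
      moreover have "dist (Vs m x) (Vs n x) \<le> K * \<gamma> ^ M * 2" if "m \<ge> M" "n \<ge> M" for m n
        using b3'[OF that(1), of x] b3'[OF that(2), of x] by (simp add: dist_real_def)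
      ultimately show "\<exists>M. \<forall>m\<ge>M. \<forall>n\<ge>M. dist (Vs m x) (Vs n x) < e"
        by (meson le_less_trans)
    qed
    thus ?thesis by (simp add: Cauchy_convergent_iff convergent_LIMSEQ_iff)
  qed
  define W where "W x = lim (\<lambda>n. Vs n x)" for x
  have b5: "\<bar>W x - Vs n x\<bar> \<le> K * \<gamma> ^ n" for x n
  proof -
    have "(\<lambda>m. \<bar>Vs m x - Vs n x\<bar>) \<longlonglongrightarrow> \<bar>W x - Vs n x\<bar>"
      unfolding W_def by (intro tendsto_intros conv)
    thus ?thesis by (rule LIMSEQ_le_const2) (use b3' in auto)
  qed
  have b6: "\<bar>W x\<bar> \<le> K" for x
  proof -
    have "(\<lambda>m. \<bar>Vs m x\<bar>) \<longlonglongrightarrow> \<bar>W x\<bar>"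
      unfolding W_def by (intro tendsto_intros conv)
    thus ?thesis by (rule LIMSEQ_le_const2) (use b1 in auto)
  qed
  have fixW: "F W s = W s" for s
  proof -
    have "\<bar>F W s - W s\<bar> \<le> (2 * K) * \<gamma> ^ n" for n
    proof -
      have "\<bar>F W s - F (Vs n) s\<bar> \<le> \<gamma> * (K * \<gamma> ^ n)"
        unfolding F_def by (rule F_contr[OF A B _ b1]) (use g b5 b6 in auto)
      moreover have "\<bar>W s - Vs (Suc n) s\<bar> \<le> K * \<gamma> ^ Suc n" by (rule b5)
      moreover have "\<gamma> * (K * \<gamma> ^ n) \<le> K * \<gamma> ^ n" "K * \<gamma> ^ Suc n \<le> K * \<gamma> ^ n"
        using g K0 by (auto simp: mult_left_le_one_le mult_le_cancel_left1 mult_left_mono power_le_one)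
      ultimately show ?thesis by (simp add: VsS)
    qed
    hence "\<bar>F W s - W s\<bar> \<le> 0" using g by (intro geo_zero[of _ "2*K" \<gamma>]) auto
    thus ?thesis by simp
  qed
  have "bounded (range W)" unfolding bounded_iff
    by (rule exI[of _ K]) (use b6 in auto)
  hence PW: "P W" unfolding P_def by (simp add: fixW)
  have VW: "Vstar T r \<gamma> A = W"
    unfolding Vstar_def
  proof (rule the_equality)
    show "bounded (range W) \<and> (\<forall>s. W s = (SUP a\<in>A. r s a (T s a) + \<gamma> * W (T s a)))"
      using PW unfolding P_def F_def by assumption
    fix V assume "bounded (range V) \<and> (\<forall>s. V s = (SUP a\<in>A. r s a (T s a) + \<gamma> * V (T s a)))"
    hence "P V" unfolding P_def F_def by assumption
    thus "V = W" using uniq PW by blast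
  qed
  show ?thesis unfolding VW using PW unfolding P_def F_def by assumption
qed



lemma l1norm_pos:
  fixes a b :: "real ^ 'n"
  assumes "a \<noteq> b" shows "0 < l1norm (a - b)"
proof -
  have nn: "0 \<le> l1norm (a - b)" unfolding l1norm_def by (simp add: sum_nonneg)
  have "l1norm (a - b) \<noteq> 0"
  proof
    assume "l1norm (a - b) = 0"
    hence "\<forall>i\<in>UNIV. \<bar>(a - b) $ i\<bar> = 0" unfolding l1norm_def
      by (subst sum_nonneg_eq_0_iff[symmetric]) auto
    hence "a = b" by (simp add: vec_eq_iff)
    thus False using assms by simp
  qed
  thus ?thesis using nn by linarith
qed

lemma one_step:
  fixes T1 T2 :: "'s::real_normed_vector \<Rightarrow> real ^ 'n \<Rightarrow> 's"
    and r :: "'s \<Rightarrow> real ^ 'n \<Rightarrow> 's \<Rightarrow> real"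
  assumes A: "A \<noteq> {}"
    and V1: "V1 s = (SUP a\<in>A. r s a (T1 s a) + \<gamma> * V1 (T1 s a))"
    and V2: "\<forall>s. V2 s = (SUP a\<in>A. r s a (T2 s a) + \<gamma> * V2 (T2 s a))"
    and M2: "\<forall>x. \<bar>V2 x\<bar> \<le> M2" and B: "\<forall>s a s'. \<bar>r s a s'\<bar> \<le> B" and g: "0 \<le> \<gamma>"
    and hom: "T1 s ` A \<subseteq> T2 s ` A"
    and close: "\<forall>a\<in>A. norm (T1 s a - T2 s a) \<le> eps"
    and r_lip: "\<forall>s s'. \<forall>a1\<in>A. \<forall>a2\<in>A. \<bar>r s a1 s' - r s a2 s'\<bar> \<le> lam1 * l1norm (a1 - a2)"
    and inv: "\<forall>a1\<in>A. \<forall>a2\<in>A. l1norm (a1 - a2) \<le> lam2 * norm (T2 s a1 - T2 s a2)"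
    and l1: "0 \<le> lam1" and l2: "0 \<le> lam2"
    and d: "\<forall>x. \<bar>V1 x - V2 x\<bar> \<le> d"
  shows "V1 s \<le> V2 s + lam1 * lam2 * eps + \<gamma> * d"
proof -
  have bd: "bdd_above ((\<lambda>a. r s a (T2 s a) + \<gamma> * V2 (T2 s a)) ` A)"
  proof (rule bdd_aboveI2[where M="B + \<gamma> * M2"])
    fix a
    have "\<gamma> * V2 (T2 s a) \<le> \<gamma> * M2" using M2 g by (simp add: mult_left_mono abs_le_iff)
    moreover have "r s a (T2 s a) \<le> B" using B by (simp add: abs_le_iff)
    ultimately show "r s a (T2 s a) + \<gamma> * V2 (T2 s a) \<le> B + \<gamma> * M2" by linarith
  qed
  have "(SUP a\<in>A. r s a (T1 s a) + \<gamma> * V1 (T1 s a)) \<le> V2 s + lam1 * lam2 * eps + \<gamma> * d"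
  proof (rule cSUP_least[OF A])
    fix a assume a: "a \<in> A"
    have "T1 s a \<in> T2 s ` A" using hom a by blast
    then obtain a' where a': "a' \<in> A" "T2 s a' = T1 s a" by (metis imageE)
    have "l1norm (a - a') \<le> lam2 * norm (T2 s a - T2 s a')" using inv a a'(1) by blast
    also have "\<dots> = lam2 * norm (T1 s a - T2 s a)" using a'(2) by (simp add: norm_minus_commute)
    also have "\<dots> \<le> lam2 * eps" using close a l2 by (simp add: mult_left_mono)
    finally have "lam1 * l1norm (a - a') \<le> lam1 * (lam2 * eps)" using l1 by (rule mult_left_mono)
    moreover have "\<bar>r s a (T1 s a) - r s a' (T1 s a)\<bar> \<le> lam1 * l1norm (a - a')"
      using r_lip a a'(1) by blast
    moreover have "\<gamma> * (V1 (T1 s a) - V2 (T1 s a)) \<le> \<gamma> * d" using d g by (simp add: mult_left_mono abs_le_iff)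
    moreover have "r s a' (T2 s a') + \<gamma> * V2 (T2 s a') \<le> V2 s"
      using cSUP_upper[OF a'(1) bd] V2 by metis
    ultimately show "r s a (T1 s a) + \<gamma> * V1 (T1 s a) \<le> V2 s + lam1 * lam2 * eps + \<gamma> * d"
      using a'(2) by (simp add: abs_le_iff algebra_simps)
  qed
  thus ?thesis using V1 by simp
qed



lemma policy:
  fixes T :: "'s \<Rightarrow> 'a \<Rightarrow> 's" and r :: "'s \<Rightarrow> 'a \<Rightarrow> 's \<Rightarrow> real"
  assumes A: "A \<noteq> {}" and g: "0 < \<gamma>" "\<gamma> < 1" and rB: "\<exists>B. \<forall>s a s'. \<bar>r s a s'\<bar> \<le> B"
    and gp: "gap1 T r \<gamma> A > K"
    and Kd: "(\<exists>a1\<in>A. \<exists>a2\<in>A. a1 \<noteq> a2) \<Longrightarrow> 0 \<le> K"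
  shows "pistar T r \<gamma> A s \<in> A \<and> Qstar T r \<gamma> A s (pistar T r \<gamma> A s) = Vstar T r \<gamma> A s"
    and "\<forall>a\<in>A. a \<noteq> pistar T r \<gamma> A s \<longrightarrow> K < Vstar T r \<gamma> A s - Qstar T r \<gamma> A s a"
proof -
  define V where "V = Vstar T r \<gamma> A"
  define Q where "Q = Qstar T r \<gamma> A"
  define \<pi> where "\<pi> = pistar T r \<gamma> A"
  obtain B where B: "\<forall>s a s'. \<bar>r s a s'\<bar> \<le> B" using rB by blast
  have bl: "bounded (range V)" and fx: "\<forall>s. V s = (SUP a\<in>A. r s a (T s a) + \<gamma> * V (T s a))"
    using bellman[OF A g rB, of T] unfolding V_def by blast+
  obtain M where M: "\<forall>x. \<bar>V x\<bar> \<le> M" using bl unfolding bounded_iff by auto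
  have Qe: "Q s a = r s a (T s a) + \<gamma> * V (T s a)" for s a by (simp add: Q_def V_def Qstar_def)
  have VQ: "V s = (SUP a\<in>A. Q s a)" for s unfolding Qe using fx by blast
  have bd: "bdd_above (Q s ` A)" for s
  proof (rule bdd_aboveI2[where M="B + \<gamma> * M"])
    fix a
    have "\<gamma> * V (T s a) \<le> \<gamma> * M" using M g by (simp add: mult_left_mono abs_le_iff)
    moreover have "r s a (T s a) \<le> B" using B by (simp add: abs_le_iff)
    ultimately show "Q s a \<le> B + \<gamma> * M" unfolding Qe by linarith
  qed
  have Qle: "Q s a \<le> V s" if "a \<in> A" for s a
    unfolding VQ using cSUP_upper[OF that bd] .
  define S where "S = {V s - Q s a | s a. a \<in> A \<and> a \<noteq> \<pi> s}"
  have gS: "gap1 T r \<gamma> A = Inf S" unfolding S_def gap1_def V_def Q_def \<pi>_def ..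
  have bS: "bdd_below S" unfolding S_def
    by (rule bdd_belowI[where m=0]) (use Qle in auto)
  have gle: "gap1 T r \<gamma> A \<le> V s - Q s a" if "a \<in> A" "a \<noteq> \<pi> s" for s a
    unfolding gS by (rule cInf_lower[OF _ bS]) (use that in \<open>auto simp: S_def\<close>)
  have att: "\<exists>a\<in>A. Q s a = V s" for s
  proof (rule ccontr)
    assume na: "\<not> (\<exists>a\<in>A. Q s a = V s)"
    have near: "\<exists>a1\<in>A. \<exists>a2\<in>A. a1 \<noteq> a2 \<and> V s - e < Q s a1 \<and> V s - e < Q s a2" if e: "0 < e" for e
    proof -
      have "V s - e < (SUP a\<in>A. Q s a)" using e VQ by simp
      then obtain a1 where a1: "a1 \<in> A" "V s - e < Q s a1"
        using less_cSUP_iff[OF A bd] by blast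
      have "Q s a1 \<noteq> V s" using na a1(1) by blast
      hence "Q s a1 < V s" using Qle[OF a1(1), of s] by linarith
      hence "Q s a1 < (SUP a\<in>A. Q s a)" using VQ[of s] by simp
      then obtain a2 where a2: "a2 \<in> A" "Q s a1 < Q s a2"
        using less_cSUP_iff[OF A bd] by blast
      show ?thesis using a1 a2 by (intro bexI[OF _ a1(1)] bexI[OF _ a2(1)]) auto
    qed
    then obtain a1 a2 where "a1 \<in> A" "a2 \<in> A" "a1 \<noteq> a2" using zero_less_one by blast
    hence K0: "0 \<le> K" using Kd by blast
    hence gpos: "0 < gap1 T r \<gamma> A" using gp by linarith
    then obtain b1 b2 where b: "b1 \<in> A" "b2 \<in> A" "b1 \<noteq> b2"
      "V s - gap1 T r \<gamma> A < Q s b1" "V s - gap1 T r \<gamma> A < Q s b2" using near by blast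
    show False
    proof (cases "b1 = \<pi> s")
      case True
      hence "b2 \<noteq> \<pi> s" using b(3) by simp
      thus False using gle[OF b(2), of s] b(5) by linarith
    next
      case False
      thus False using gle[OF b(1), of s] b(4) by linarith
    qed
  qed
  have "\<pi> s \<in> A \<and> Q s (\<pi> s) = V s"
    unfolding \<pi>_def pistar_def Q_def[symmetric] V_def[symmetric]
    by (rule someI_ex) (use att in blast)
  thus "pistar T r \<gamma> A s \<in> A \<and> Qstar T r \<gamma> A s (pistar T r \<gamma> A s) = Vstar T r \<gamma> A s"
    by (simp add: \<pi>_def Q_def V_def)
  show "\<forall>a\<in>A. a \<noteq> pistar T r \<gamma> A s \<longrightarrow> K < Vstar T r \<gamma> A s - Qstar T r \<gamma> A s a"
    using gle gp unfolding \<pi>_def Q_def V_def by force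
qed



theorem mainTheorem2:
  fixes T T' :: "'s::real_normed_vector \<Rightarrow> real ^ 'n \<Rightarrow> 's"
    and r :: "'s \<Rightarrow> real ^ 'n \<Rightarrow> 's \<Rightarrow> real"
    and A :: "(real ^ 'n) set"
    and rho0 :: "'s measure"
    and \<gamma> eps_m lam1 lam2 :: real
  assumes A_ne: "A \<noteq> {}"
    and gamma: "0 < \<gamma>" "\<gamma> < 1"
    and rho0: "prob_space rho0" "sets rho0 = sets borel"
    and r_bounded: "\<exists>B. \<forall>s a s'. \<bar>r s a s'\<bar> \<le> B"
    and homomorphous: "\<forall>s. T s ` A = T' s ` A"
    and close: "\<forall>s. \<forall>a\<in>A. norm (T s a - T' s a) \<le> eps_m"
    and r_lip: "\<forall>s s'. \<forall>a1\<in>A. \<forall>a2\<in>A. \<bar>r s a1 s' - r s a2 s'\<bar> \<le> lam1 * l1norm (a1 - a2)"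
    and T_invlip: "\<forall>s. \<forall>a1\<in>A. \<forall>a2\<in>A. l1norm (a1 - a2) \<le> lam2 * norm (T s a1 - T s a2)"
    and T'_invlip: "\<forall>s. \<forall>a1\<in>A. \<forall>a2\<in>A. l1norm (a1 - a2) \<le> lam2 * norm (T' s a1 - T' s a2)"
    and gap: "action_gap T T' r \<gamma> A > (2 - \<gamma>) * lam1 * lam2 * eps_m / (1 - \<gamma>)"
  shows "\<forall>s. dstat T (pistar T r \<gamma> A) rho0 \<gamma> s = dstat T' (pistar T' r \<gamma> A) rho0 \<gamma> s"
proof -
  define K where "K = (2 - \<gamma>) * lam1 * lam2 * eps_m / (1 - \<gamma>)"
  define c where "c = lam1 * lam2 * eps_m"
  obtain B where B: "\<forall>s a s'. \<bar>r s a s'\<bar> \<le> B" using r_bounded by blast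
  obtain a0 where a0: "a0 \<in> A" using A_ne by blast
  have eps0: "0 \<le> eps_m" using close a0 by (meson norm_ge_zero order_trans)
  have lams: "0 \<le> lam1 \<and> 0 \<le> lam2" if "a1 \<in> A" "a2 \<in> A" "a1 \<noteq> a2" for a1 a2
  proof -
    have p: "0 < l1norm (a1 - a2)" using l1norm_pos[OF that(3)] .
    have "0 \<le> lam1 * l1norm (a1 - a2)" using r_lip that(1,2)
      by (meson abs_ge_zero order_trans)
    hence "0 \<le> lam1" using p by (simp add: zero_le_mult_iff)
    moreover have "0 < lam2 * norm (T undefined a1 - T undefined a2)" using T_invlip that(1,2) p
      by (meson less_le_trans)
    hence "0 \<le> lam2" by (simp add: zero_less_mult_iff)
    ultimately show ?thesis by simp
  qed
  have Kd: "0 \<le> K" if ex2: "\<exists>a1\<in>A. \<exists>a2\<in>A. a1 \<noteq> a2"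
  proof -
    obtain a1 a2 where "a1 \<in> A" "a2 \<in> A" "a1 \<noteq> a2" using ex2 by blast
    from lams[OF this] have "0 \<le> lam1" "0 \<le> lam2" by auto
    hence "0 \<le> (2 - \<gamma>) * lam1 * lam2 * eps_m" using eps0 gamma by simp
    thus ?thesis unfolding K_def using gamma by simp
  qed
  have g1: "gap1 T r \<gamma> A > K" and g2: "gap1 T' r \<gamma> A > K"
    using gap unfolding K_def action_gap_def by auto
  note P1 = policy[OF A_ne gamma r_bounded g1 Kd] and P2 = policy[OF A_ne gamma r_bounded g2 Kd]
  define V where "V = Vstar T r \<gamma> A"
  define V' where "V' = Vstar T' r \<gamma> A"
  define \<pi> where "\<pi> = pistar T r \<gamma> A"
  define \<pi>' where "\<pi>' = pistar T' r \<gamma> A"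
  have bl1: "bounded (range V)" and fx1: "\<forall>s. V s = (SUP a\<in>A. r s a (T s a) + \<gamma> * V (T s a))"
    using bellman[OF A_ne gamma r_bounded, of T] unfolding V_def by blast+
  have bl2: "bounded (range V')" and fx2: "\<forall>s. V' s = (SUP a\<in>A. r s a (T' s a) + \<gamma> * V' (T' s a))"
    using bellman[OF A_ne gamma r_bounded, of T'] unfolding V'_def by blast+
  obtain M1 where M1: "\<forall>x. \<bar>V x\<bar> \<le> M1" using bl1 unfolding bounded_iff by auto
  obtain M2 where M2: "\<forall>x. \<bar>V' x\<bar> \<le> M2" using bl2 unfolding bounded_iff by auto
  have step: "T s (\<pi> s) = T' s (\<pi>' s)" for s
  proof (rule ccontr)
    assume ne: "T s (\<pi> s) \<noteq> T' s (\<pi>' s)"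
    define s1 where "s1 = T s (\<pi> s)"
    define s2 where "s2 = T' s (\<pi>' s)"
    have pi: "\<pi> s \<in> A" "Qstar T r \<gamma> A s (\<pi> s) = V s" using P1(1)[of s] unfolding \<pi>_def V_def by auto
    have pi': "\<pi>' s \<in> A" "Qstar T' r \<gamma> A s (\<pi>' s) = V' s" using P2(1)[of s] unfolding \<pi>'_def V'_def by auto
    have "s1 \<in> T' s ` A" using homomorphous pi(1) unfolding s1_def by blast
    then obtain a' where a': "a' \<in> A" "T' s a' = s1" by (metis imageE)
    have "s2 \<in> T s ` A" using homomorphous pi'(1) unfolding s2_def by blast
    then obtain b where b: "b \<in> A" "T s b = s2" by (metis imageE)
    have a'ne: "a' \<noteq> \<pi>' s" using a'(2) ne unfolding s1_def s2_def by auto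
    have bne: "b \<noteq> \<pi> s" using b(2) ne unfolding s1_def s2_def by auto
    from lams[OF a'(1) pi'(1) a'ne] have l1: "0 \<le> lam1" and l2: "0 \<le> lam2" by auto
    have c0: "0 \<le> c" unfolding c_def using l1 l2 eps0 by simp
    have gA: "K < V' s - Qstar T' r \<gamma> A s a'" using P2(2)[of s] a'(1) a'ne unfolding \<pi>'_def V'_def by blast
    have gB: "K < V s - Qstar T r \<gamma> A s b" using P1(2)[of s] b(1) bne unfolding \<pi>_def V_def by blast
    define D where "D = (SUP x. \<bar>V x - V' x\<bar>)"
    have bdD: "bdd_above (range (\<lambda>x. \<bar>V x - V' x\<bar>))"
    proof (rule bdd_aboveI2[where M="M1 + M2"])
      fix x
      have "\<bar>V x\<bar> \<le> M1" "\<bar>V' x\<bar> \<le> M2" using M1 M2 by auto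
      thus "\<bar>V x - V' x\<bar> \<le> M1 + M2" by linarith
    qed
    have Dge: "\<bar>V x - V' x\<bar> \<le> D" for x unfolding D_def by (rule cSUP_upper[OF _ bdD]) simp
    have Dle: "\<bar>V x - V' x\<bar> \<le> c + \<gamma> * D" for x
    proof -
      have g0: "0 \<le> \<gamma>" using gamma by simp
      have hom1: "T x ` A \<subseteq> T' x ` A" and hom2: "T' x ` A \<subseteq> T x ` A" using homomorphous by auto
      have close1: "\<forall>a\<in>A. norm (T x a - T' x a) \<le> eps_m" using close by blast
      have close2: "\<forall>a\<in>A. norm (T' x a - T x a) \<le> eps_m" using close by (simp add: norm_minus_commute)
      have inv1: "\<forall>a1\<in>A. \<forall>a2\<in>A. l1norm (a1 - a2) \<le> lam2 * norm (T' x a1 - T' x a2)" using T'_invlip by blast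
      have inv2: "\<forall>a1\<in>A. \<forall>a2\<in>A. l1norm (a1 - a2) \<le> lam2 * norm (T x a1 - T x a2)" using T_invlip by blast
      have d1: "\<forall>y. \<bar>V y - V' y\<bar> \<le> D" using Dge by blast
      have d2: "\<forall>y. \<bar>V' y - V y\<bar> \<le> D" using Dge by (simp add: abs_minus_commute)
      have "V x \<le> V' x + lam1 * lam2 * eps_m + \<gamma> * D"
        by (rule one_step[where ?V1.0=V and ?V2.0=V' and ?T1.0=T and ?T2.0=T' and s=x and r=r and A=A and \<gamma>=\<gamma>, OF A_ne fx1[rule_format, of x] fx2 M2 B g0 hom1 close1 r_lip inv1 l1 l2 d1])
      moreover have "V' x \<le> V x + lam1 * lam2 * eps_m + \<gamma> * D"
        by (rule one_step[where ?V1.0=V' and ?V2.0=V and ?T1.0=T' and ?T2.0=T and s=x and r=r and A=A and \<gamma>=\<gamma>, OF A_ne fx2[rule_format, of x] fx1 M1 B g0 hom2 close2 r_lip inv2 l1 l2 d2])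
      ultimately show ?thesis unfolding c_def by (simp add: abs_le_iff)
    qed
    have "D \<le> c + \<gamma> * D" unfolding D_def
      by (rule cSUP_least) (use Dle[unfolded D_def] in auto)
    hence "(1 - \<gamma>) * D \<le> c" by (simp add: algebra_simps)
    hence DX: "D \<le> c / (1 - \<gamma>)" using gamma by (simp add: field_simps)
    define X where "X = c / (1 - \<gamma>)"
    have cX: "c + \<gamma> * X = X" unfolding X_def using gamma by (simp add: field_simps)
    have XK: "X \<le> K"
    proof -
      have "K = (2 - \<gamma>) * X" unfolding K_def X_def c_def by simp
      moreover have "0 \<le> X" unfolding X_def using c0 gamma by simp
      moreover have "0 \<le> (1 - \<gamma>) * X" using gamma \<open>0 \<le> X\<close> by simp
      ultimately show ?thesis by (simp add: algebra_simps)
    qed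
    have "l1norm (\<pi>' s - b) \<le> lam2 * norm (T s (\<pi>' s) - T s b)" using T_invlip pi'(1) b(1) by blast
    also have "\<dots> = lam2 * norm (T s (\<pi>' s) - T' s (\<pi>' s))" using b(2) unfolding s2_def by simp
    also have "\<dots> \<le> lam2 * eps_m" using close pi'(1) l2 by (simp add: mult_left_mono)
    finally have "lam1 * l1norm (\<pi>' s - b) \<le> lam1 * (lam2 * eps_m)" using l1 by (rule mult_left_mono)
    moreover have "\<bar>r s (\<pi>' s) s2 - r s b s2\<bar> \<le> lam1 * l1norm (\<pi>' s - b)"
      using r_lip pi'(1) b(1) by blast
    ultimately have r1: "r s (\<pi>' s) s2 - r s b s2 \<le> c" unfolding c_def by (simp add: abs_le_iff mult.assoc)
    have "l1norm (\<pi> s - a') \<le> lam2 * norm (T' s (\<pi> s) - T' s a')" using T'_invlip pi(1) a'(1) by blast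
    also have "\<dots> = lam2 * norm (T s (\<pi> s) - T' s (\<pi> s))" using a'(2) unfolding s1_def
      by (simp add: norm_minus_commute)
    also have "\<dots> \<le> lam2 * eps_m" using close pi(1) l2 by (simp add: mult_left_mono)
    finally have "lam1 * l1norm (\<pi> s - a') \<le> lam1 * (lam2 * eps_m)" using l1 by (rule mult_left_mono)
    moreover have "\<bar>r s (\<pi> s) s1 - r s a' s1\<bar> \<le> lam1 * l1norm (\<pi> s - a')"
      using r_lip pi(1) a'(1) by blast
    ultimately have r2: "r s (\<pi> s) s1 - r s a' s1 \<le> c" unfolding c_def by (simp add: abs_le_iff mult.assoc)
    have v1: "\<gamma> * (V' s2 - V s2) \<le> \<gamma> * X" using Dge[of s2] DX gamma unfolding X_def
      by (intro mult_left_mono) (auto simp: abs_le_iff)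
    have v2: "\<gamma> * (V s1 - V' s1) \<le> \<gamma> * X" using Dge[of s1] DX gamma unfolding X_def
      by (intro mult_left_mono) (auto simp: abs_le_iff)
    have e1: "V' s = r s (\<pi>' s) s2 + \<gamma> * V' s2" using pi'(2) unfolding Qstar_def V'_def s2_def by simp
    have e2: "Qstar T r \<gamma> A s b = r s b s2 + \<gamma> * V s2" unfolding Qstar_def V_def using b(2) by simp
    have e3: "V s = r s (\<pi> s) s1 + \<gamma> * V s1" using pi(2) unfolding Qstar_def V_def s1_def by simp
    have e4: "Qstar T' r \<gamma> A s a' = r s a' s1 + \<gamma> * V' s1" unfolding Qstar_def V'_def using a'(2) by simp
    have v1': "\<gamma> * V' s2 - \<gamma> * V s2 \<le> \<gamma> * X" using v1 by (simp add: right_diff_distrib)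
    have v2': "\<gamma> * V s1 - \<gamma> * V' s1 \<le> \<gamma> * X" using v2 by (simp add: right_diff_distrib)
    show False using gA gB e1 e2 e3 e4 r1 r2 v1' v2' cX XK by linarith
  qed
  have tr: "traj T \<pi> s0 t = traj T' \<pi>' s0 t" for s0 t
    by (induction t) (simp_all add: step)
  show ?thesis unfolding dstat_def using tr \<pi>_def \<pi>'_def by simp
qed

end
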